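(* Let $X$ be a compact metric countable space and $f:X\to X$ a continuous function such that every accumulation point of $X$ is periodic. Let $a$ be an accumulation point of $X$ and $(a_n)_{n\in\mathbb N}$ a sequence in $X$ such that $f^p(a_n)\to f^p(a)$ for some $p\in\mathbb N^*$. If $b\in X$ is a periodic point with $b\in\bigcap_{n\in\mathbb N}\overline{\mathcal O_f(a_n)}$, then $b\in\mathcal O_f(a)$.
   Context: $\mathbb N^*$ denotes the set of free ultrafilters on $\mathbb N$. For $p\in\mathbb N^*$, the $p$-iterate $f^p:X\to X$ is defined by $f^p(x)=p\text{-}\lim_{n\to\infty}f^n(x)$, where $y=p\text{-}\lim x_n$ means $\{n: x_n\in V\}\in p$ for every neighborhood $V$ of $y$. The orbit of $x$ is $\mathcal O_f(x)=\{f^n(x):n\in\mathbb N\}$. A point $x$ is periodic if $f^n(x)=x$ for some $n\ge1$. An accumulation point is a non-isolated point. *)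

theory Defs
  imports "HOL-Analysis.Analysis"
begin

definition free_ultrafilter :: "nat filter \<Rightarrow> bool" where
  "free_ultrafilter p \<longleftrightarrow> p \<noteq> bot
     \<and> (\<forall>P. eventually P p \<or> eventually (\<lambda>n. \<not> P n) p)
     \<and> (\<forall>m. \<not> eventually (\<lambda>n. n = m) p)"

definition p_iterate :: "nat filter \<Rightarrow> ('a::t2_space \<Rightarrow> 'a) \<Rightarrow> 'a \<Rightarrow> 'a" where
  "p_iterate p f x = Lim p (\<lambda>n. (f ^^ n) x)"

definition orbit :: "('a \<Rightarrow> 'a) \<Rightarrow> 'a \<Rightarrow> 'a set" where
  "orbit f x = {(f ^^ n) x | n. True}"

definition periodic_pt :: "('a \<Rightarrow> 'a) \<Rightarrow> 'a \<Rightarrow> bool" where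
  "periodic_pt f x \<longleftrightarrow> (\<exists>n\<ge>1. (f ^^ n) x = x)"

end

theory Submission
  imports Defs "HOL-Analysis.Analysis"
begin

lemma funpow_app: "(f ^^ a) ((f ^^ b) x) = (f ^^ (a + b)) x"
  by (simp add: funpow_add)

lemma funpow_mult_fix: "(f ^^ m) b = b \<Longrightarrow> (f ^^ (m*t)) b = b"
proof (induction t)
  case (Suc t)
  have "(f ^^ (m * Suc t)) b = (f ^^ m) ((f ^^ (m*t)) b)"
    by (simp add: funpow_add mult.commute)
  then show ?case using Suc by simp
qed simp

lemma orbit_periodic_finite:
  assumes "periodic_pt f b" shows "finite (orbit f b)"
proof -
  obtain m where m: "m \<ge> 1" "(f ^^ m) b = b" using assms unfolding periodic_pt_def by auto
  have "orbit f b \<subseteq> (\<lambda>j. (f ^^ j) b) ` {..<m}"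
  proof
    fix z assume "z \<in> orbit f b"
    then obtain j where j: "z = (f ^^ j) b" unfolding orbit_def by auto
    have "(f ^^ j) b = (f ^^ (j mod m)) ((f ^^ (m * (j div m))) b)"
      by (metis funpow_add comp_apply mod_mult_div_eq add.commute mult.commute)
    also have "\<dots> = (f ^^ (j mod m)) b" using funpow_mult_fix[OF m(2)] by simp
    finally show "z \<in> (\<lambda>j. (f ^^ j) b) ` {..<m}" using j m(1) by auto
  qed
  then show ?thesis using finite_subset by blast
qed

lemma orbit_trans: "z \<in> orbit f y \<Longrightarrow> w \<in> orbit f z \<Longrightarrow> w \<in> orbit f y"
  unfolding orbit_def by (auto simp: funpow_add[symmetric] comp_def) (metis funpow_add comp_apply)

lemma orbit_self: "y \<in> orbit f y"
  unfolding orbit_def by (auto intro: exI[of _ 0])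

lemma orbit_cycle:
  assumes "periodic_pt f y" "z \<in> orbit f y" shows "y \<in> orbit f z"
proof -
  obtain m where m: "m \<ge> 1" "(f ^^ m) y = y" using assms unfolding periodic_pt_def by auto
  obtain i where i: "z = (f ^^ i) y" using assms(2) unfolding orbit_def by auto
  have "m * i \<ge> i" using m(1) by simp
  then have "(f ^^ (m*i - i)) z = (f ^^ (m*i)) y"
    by (metis i funpow_add comp_apply le_add_diff_inverse2)
  also have "\<dots> = y" using funpow_mult_fix[OF m(2)] by simp
  finally show ?thesis unfolding orbit_def by auto
qed

lemma orbit_periodic:
  assumes "periodic_pt f y" "z \<in> orbit f y" shows "periodic_pt f z"
proof -
  obtain m where m: "m \<ge> 1" "(f ^^ m) y = y" using assms unfolding periodic_pt_def by auto
  obtain i where i: "z = (f ^^ i) y" using assms(2) unfolding orbit_def by auto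
  have "(f ^^ m) z = (f ^^ i) ((f ^^ m) y)"
    by (metis i funpow_add comp_apply add.commute)
  then show ?thesis using m i unfolding periodic_pt_def by auto
qed

lemma funpow_in: "f ` X \<subseteq> X \<Longrightarrow> x \<in> X \<Longrightarrow> (f ^^ j) x \<in> X"
  by (induction j) auto

lemma funpow_cont: "continuous_on X f \<Longrightarrow> f ` X \<subseteq> X \<Longrightarrow> continuous_on X (f ^^ j)"
proof (induction j)
  case 0 then show ?case by (simp add: continuous_on_id)
next
  case (Suc j)
  have "continuous_on X (f \<circ> (f ^^ j))"
    by (rule continuous_on_compose) (use Suc funpow_in[of f X] in \<open>auto intro: continuous_on_subset\<close>)
  then show ?case by simp
qed

lemma step_exists:
  fixes P :: "nat \<Rightarrow> bool"
  shows "P j1 \<Longrightarrow> \<not> P j2 \<Longrightarrow> j1 \<le> j2 \<Longrightarrow> \<exists>j. j1 \<le> j \<and> P j \<and> \<not> P (Suc j)"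
proof (induction j2)
  case 0 then show ?case by simp
next
  case (Suc j2)
  show ?case
  proof (cases "P j2")
    case True then show ?thesis using Suc by (metis le_Suc_eq)
  next
    case False
    then have "j1 \<le> j2" using Suc by (metis le_Suc_eq)
    then show ?thesis using Suc False by blast
  qed
qed

lemma countable_compact_isolated:
  fixes S :: "'a::metric_space set"
  assumes "compact S" "countable S" "S \<noteq> {}"
  shows "\<exists>y\<in>S. \<exists>T. open T \<and> T \<inter> S = {y}"
proof (rule ccontr)
  assume nis: "\<not> ?thesis"
  let ?X = "top_of_set S"
  have lc: "locally_compact_space ?X \<and> regular_space ?X"
    by (metis assms(1) compact_imp_locally_compact_space compact_space_subtopology compactin_euclidean_iff
        metrizable_imp_regular_space metrizable_space_euclidean metrizable_space_subtopology)
  have "?X interior_of \<Union>((\<lambda>z. {z}) ` S) = {}"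
  proof (rule Baire_category_alt)
    show "countable ((\<lambda>z. {z}) ` S)" using assms(2) by simp
    fix T assume "T \<in> (\<lambda>z. {z}) ` S"
    then obtain z where z: "z \<in> S" "T = {z}" by auto
    show "closedin ?X T \<and> ?X interior_of T = {}"
    proof
      show "closedin ?X T" using z by (simp add: closedin_closed_Int exI[of _ "{z}"])
      show "?X interior_of T = {}"
        unfolding interior_of_eq_empty
      proof (intro allI impI)
        fix U assume U: "openin ?X U \<and> U \<subseteq> T"
        then obtain V where "open V" "U = S \<inter> V" by (auto simp: openin_open)
        then show "U = {}" using U z nis by auto
      qed
    qed
  qed (use lc in auto)
  moreover have "\<Union>((\<lambda>z. {z}) ` S) = S" by auto
  ultimately show False using assms(3) by (simp add: interior_of_openin)
qed

definition tailset :: "('a \<Rightarrow> 'a) \<Rightarrow> 'a \<Rightarrow> nat \<Rightarrow> 'a set" where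
  "tailset f x N = {(f ^^ j) x | j. N \<le> j}"

definition omega_set :: "('a \<Rightarrow> 'a) \<Rightarrow> 'a \<Rightarrow> ('a::topological_space) set" where
  "omega_set f x = (\<Inter>N. closure (tailset f x N))"

lemma closure_hit:
  assumes "z \<in> closure S" "open T" "z \<in> T" shows "\<exists>w\<in>S. w \<in> T"
  using assms by (meson closure_iff_nhds_not_empty disjoint_iff subset_refl)

lemma omega_single:
  fixes X :: "'a::metric_space set" and f :: "'a \<Rightarrow> 'a"
  assumes cX: "compact X" and ctX: "countable X"
    and cf: "continuous_on X f" and fX: "f ` X \<subseteq> X"
    and perX: "\<forall>x\<in>X. x islimpt X \<longrightarrow> periodic_pt f x"
    and xX: "x \<in> X" and bom: "b \<in> omega_set f x" and zom: "z \<in> omega_set f x"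
  shows "z \<in> orbit f b"
proof -
  define \<omega> where "\<omega> = omega_set f x"
  define xs where "xs j = (f ^^ j) x" for j
  have xsX: "xs j \<in> X" for j unfolding xs_def using funpow_in[OF fX xX] .
  have clX: "closed X" using cX compact_imp_closed by auto
  have tX: "tailset f x N \<subseteq> X" for N unfolding tailset_def using xsX xs_def by auto
  have ctX': "closure (tailset f x N) \<subseteq> X" for N using tX clX closure_minimal by blast
  have omX: "\<omega> \<subseteq> X" unfolding \<omega>_def omega_set_def using ctX' by blast
  have omcl: "closed \<omega>" unfolding \<omega>_def omega_set_def by auto
  have omc: "compact \<omega>" using omX omcl cX by (metis compact_Int_closed inf.absorb_iff2)
  have omct: "countable \<omega>" using omX ctX countable_subset by blast
  have om_iff: "w \<in> \<omega> \<longleftrightarrow> (\<forall>N. w \<in> closure (tailset f x N))" for w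
    unfolding \<omega>_def omega_set_def by auto
  have inv: "f w \<in> \<omega>" if "w \<in> \<omega>" for w
  proof -
    have "f w \<in> closure (tailset f x N)" for N
    proof -
      have "f ` tailset f x N \<subseteq> tailset f x N"
      proof
        fix v assume "v \<in> f ` tailset f x N"
        then obtain j where j: "N \<le> j" "v = f ((f ^^ j) x)" unfolding tailset_def by auto
        then have "v = (f ^^ Suc j) x" "N \<le> Suc j" by auto
        then show "v \<in> tailset f x N" unfolding tailset_def by blast
      qed
      then have "f ` closure (tailset f x N) \<subseteq> closure (tailset f x N)"
        by (meson closed_closure closure_subset continuous_on_subset cf ctX' image_closure_subset subset_trans)
      then show ?thesis using that om_iff by blast
    qed
    then show ?thesis using om_iff by blast
  qed
  have invn: "(f ^^ j) w \<in> \<omega>" if "w \<in> \<omega>" for w j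
    using that by (induction j) (auto intro: inv)
  have per: "periodic_pt f w" if w: "w \<in> \<omega>" for w
  proof (cases "w islimpt X")
    case True then show ?thesis using perX omX w by auto
  next
    case False
    then obtain T where T: "open T" "w \<in> T" "\<forall>y\<in>X. y \<in> T \<longrightarrow> y = w"
      unfolding islimpt_def by auto
    have hit: "\<exists>j\<ge>N. xs j = w" for N
    proof -
      obtain v where "v \<in> tailset f x N" "v \<in> T" using closure_hit om_iff w T by blast
      then obtain j where j: "N \<le> j" "v = xs j" unfolding tailset_def xs_def by auto
      then have "v = w" using T(3) xsX \<open>v \<in> T\<close> by auto
      then show ?thesis using j by auto
    qed
    obtain j1 where j1: "xs j1 = w" using hit by blast
    obtain j2 where j2: "j2 \<ge> Suc j1" "xs j2 = w" using hit by blast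
    have "(f ^^ (j2 - j1)) w = xs j2" unfolding j1[symmetric] xs_def using j2(1)
      by (simp add: funpow_app)
    then show ?thesis using j2 unfolding periodic_pt_def by (intro exI[of _ "j2 - j1"]) auto
  qed
  have "\<omega> \<noteq> {}" using bom \<omega>_def by auto
  then obtain y T0 where y: "y \<in> \<omega>" "open T0" "T0 \<inter> \<omega> = {y}"
    using countable_compact_isolated[OF omc omct] by auto
  define C where "C = orbit f y"
  have Com: "C \<subseteq> \<omega>" unfolding C_def orbit_def using invn y(1) by auto
  have Cfin: "finite C" unfolding C_def by (rule orbit_periodic_finite[OF per[OF y(1)]])
  have yC: "y \<in> C" unfolding C_def by (rule orbit_self)
  have fC: "f c \<in> C" if cC: "c \<in> C" for c
  proof -
    from cC obtain n where "c = (f ^^ n) y" unfolding C_def orbit_def by auto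
    then have "f c = (f ^^ Suc n) y" by simp
    then show ?thesis unfolding C_def orbit_def by blast
  qed
  have loc: "\<exists>d>0. \<forall>w\<in>\<omega>. dist w c < d \<longrightarrow> w \<in> C" if c: "c \<in> C" for c
  proof -
    have "y \<in> orbit f c" using orbit_cycle[OF per[OF y(1)]] c unfolding C_def by blast
    then obtain i where i: "y = (f ^^ i) c" unfolding orbit_def by auto
    obtain e where e: "e > 0" "ball y e \<subseteq> T0" using y(2,3) open_contains_ball by blast
    have "continuous_on X (f ^^ i)" using funpow_cont[OF cf fX] .
    moreover have cX': "c \<in> X" using c Com omX by auto
    ultimately have "\<forall>x\<in>X. \<forall>e>0. \<exists>d>0. \<forall>x'\<in>X. dist x' x < d \<longrightarrow> dist ((f ^^ i) x') ((f ^^ i) x) < e"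
      unfolding continuous_on_iff by simp
    then obtain d where d: "d > 0" "\<forall>w\<in>X. dist w c < d \<longrightarrow> dist ((f ^^ i) w) ((f ^^ i) c) < e"
      using e(1) cX' by blast
    show ?thesis
    proof (intro exI[of _ d] conjI ballI impI)
      show "d > 0" by fact
      fix w assume w: "w \<in> \<omega>" "dist w c < d"
      then have "(f ^^ i) w \<in> ball y e" using d omX i by (auto simp: dist_commute)
      then have "(f ^^ i) w \<in> T0 \<inter> \<omega>" using e invn w by auto
      then have "(f ^^ i) w = y" using y by auto
      then have "y \<in> orbit f w" unfolding orbit_def by auto
      then have "w \<in> orbit f y" using orbit_cycle[OF per[OF w(1)]] by blast
      then show "w \<in> C" unfolding C_def .
    qed
  qed
  then have "\<forall>c\<in>C. \<exists>d. d > 0 \<and> (\<forall>w\<in>\<omega>. dist w c < d \<longrightarrow> w \<in> C)" by blast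
  from bchoice[OF this] obtain \<delta> where \<delta>: "\<forall>c\<in>C. \<delta> c > 0 \<and> (\<forall>w\<in>\<omega>. dist w c < \<delta> c \<longrightarrow> w \<in> C)"
    by blast
  have omC: "\<omega> \<subseteq> C"
  proof (rule ccontr)
    assume "\<not> \<omega> \<subseteq> C"
    then obtain b' where b': "b' \<in> \<omega>" "b' \<notin> C" by blast
    define U where "U = (\<Union>c\<in>C. ball c (\<delta> c / 2))"
    define Cl where "Cl = (\<Union>c\<in>C. cball c (\<delta> c / 2))"
    have oU: "open U" unfolding U_def by auto
    have cCl: "closed Cl" unfolding Cl_def using Cfin by auto
    have UCl: "U \<subseteq> Cl" unfolding U_def Cl_def by auto
    have CU: "C \<subseteq> U" unfolding U_def using \<delta> by force
    have ClC: "w \<in> C" if w1: "w \<in> \<omega>" and w2: "w \<in> Cl" for w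
    proof -
      obtain c where c: "c \<in> C" "dist c w \<le> \<delta> c / 2" using w2 unfolding Cl_def by auto
      then show ?thesis using \<delta> w1 by (auto simp: dist_commute)
    qed
    obtain A where A: "open A" "A \<inter> X = f -` U \<inter> X"
      using cf oU unfolding continuous_on_open_invariant by blast
    define W where "W = A \<inter> U"
    have oW: "open W" unfolding W_def using A oU by auto
    have CW: "C \<subseteq> W"
    proof
      fix c assume c: "c \<in> C"
      then have "c \<in> X" "f c \<in> U" using Com omX fC CU by auto
      then have "c \<in> A" using A(2) by blast
      then show "c \<in> W" unfolding W_def using CU c by auto
    qed
    have WU: "W \<subseteq> U" unfolding W_def by auto
    have fW: "f w \<in> U" if "w \<in> X" "w \<in> W" for w using that A unfolding W_def by blast
    define V where "V = - Cl"
    have oV: "open V" unfolding V_def using cCl by auto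
    have b'V: "b' \<in> V" unfolding V_def using ClC b' by auto
    have VW: "V \<inter> W = {}" unfolding V_def using WU UCl by auto
    define K where "K = X \<inter> (Cl \<inter> - W)"
    have cK: "compact K" unfolding K_def using cX cCl oW
      by (intro compact_Int_closed) auto
    have esc: "\<exists>j\<ge>N. xs j \<in> W \<and> xs (Suc j) \<notin> W" for N
    proof -
      have "y \<in> W" using CW yC by auto
      then obtain v where "v \<in> tailset f x N" "v \<in> W" using closure_hit om_iff y(1) oW by blast
      then obtain j1 where j1: "j1 \<ge> N" "xs j1 \<in> W" unfolding tailset_def xs_def by auto
      obtain v2 where "v2 \<in> tailset f x j1" "v2 \<in> V" using closure_hit om_iff b' b'V oV by blast
      then obtain j2 where j2: "j2 \<ge> j1" "xs j2 \<notin> W" unfolding tailset_def xs_def using VW by auto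
      from step_exists[of "\<lambda>j. xs j \<in> W", OF j1(2) j2(2) j2(1)] j1(1) show ?thesis
        by (meson order_trans)
    qed
    then obtain g where g: "\<And>N. g N \<ge> N \<and> xs (g N) \<in> W \<and> xs (Suc (g N)) \<notin> W" by metis
    define s where "s k = xs (Suc (g k))" for k
    have sK: "s k \<in> K" for k
    proof -
      have "s k = f (xs (g k))" unfolding s_def xs_def by simp
      then have "s k \<in> U" using fW xsX g by auto
      then show ?thesis unfolding K_def s_def using UCl g xsX by auto
    qed
    obtain l r where l: "l \<in> K" "strict_mono r" "(s \<circ> r) \<longlonglongrightarrow> l"
      using cK sK unfolding compact_eq_seq_compact_metric seq_compact_def by metis
    have "l \<in> closure (tailset f x N)" for N
    proof (rule Lim_in_closed_set[OF closed_closure _ _ l(3)])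
      show "eventually (\<lambda>k. (s \<circ> r) k \<in> closure (tailset f x N)) sequentially"
      proof (rule eventually_sequentiallyI[of N])
        fix k assume "N \<le> k"
        then have "N \<le> Suc (g (r k))" using seq_suble[OF l(2), of k] g[of "r k"] by linarith
        moreover have "(s \<circ> r) k = (f ^^ Suc (g (r k))) x" unfolding s_def xs_def by simp
        ultimately have "(s \<circ> r) k \<in> tailset f x N" unfolding tailset_def by blast
        then show "(s \<circ> r) k \<in> closure (tailset f x N)" using closure_subset by blast
      qed
    qed simp
    then have "l \<in> \<omega>" using om_iff by blast
    then have "l \<in> C" using ClC l(1) K_def by auto
    then show False using CW l(1) K_def by auto
  qed
  have "b \<in> orbit f y" using omC bom \<omega>_def C_def by auto
  then have "y \<in> orbit f b" using orbit_cycle[OF per[OF y(1)]] by blast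
  moreover have "z \<in> orbit f y" using omC zom \<omega>_def C_def by auto
  ultimately show ?thesis by (rule orbit_trans)
qed

lemma ultra_eventually_ge:
  assumes "free_ultrafilter p" shows "eventually (\<lambda>j. N \<le> j) p"
proof (induction N)
  case (Suc N)
  have "eventually (\<lambda>j. \<not> j = N) p" using assms unfolding free_ultrafilter_def by blast
  with Suc show ?case by eventually_elim auto
qed simp

lemma ultra_tendsto:
  fixes g :: "nat \<Rightarrow> 'a::metric_space"
  assumes p: "free_ultrafilter p" and S: "compact S" and gS: "\<forall>j. g j \<in> S"
  shows "(g \<longlongrightarrow> Lim p g) p"
proof -
  have pb: "p \<noteq> bot" using p unfolding free_ultrafilter_def by blast
  have "filtermap g p \<noteq> bot" using pb by (simp add: filtermap_bot_iff)
  moreover have "eventually (\<lambda>x. x \<in> S) (filtermap g p)" using gS by (simp add: eventually_filtermap)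
  ultimately obtain L where L: "L \<in> S" "inf (nhds L) (filtermap g p) \<noteq> bot"
    using S unfolding compact_filter by blast
  have "(g \<longlongrightarrow> L) p"
    unfolding tendsto_def
  proof (intro allI impI)
    fix T assume T: "open T" "L \<in> T"
    show "eventually (\<lambda>x. g x \<in> T) p"
    proof (rule ccontr)
      assume "\<not> eventually (\<lambda>x. g x \<in> T) p"
      then have ev: "eventually (\<lambda>x. g x \<notin> T) p" using p unfolding free_ultrafilter_def by blast
      have "eventually (\<lambda>x. False) (inf (nhds L) (filtermap g p))"
        unfolding eventually_inf
        by (rule exI[of _ "\<lambda>x. x \<in> T"], rule exI[of _ "\<lambda>x. x \<notin> T"])
           (use T ev in \<open>auto simp: eventually_nhds eventually_filtermap\<close>)
      then show False using L(2) by (simp add: eventually_False)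
    qed
  qed
  then show ?thesis using tendsto_Lim pb by metis
qed

lemma p_iter_omega:
  fixes X :: "'a::metric_space set"
  assumes p: "free_ultrafilter p" and cX: "compact X" and fX: "f ` X \<subseteq> X" and xX: "x \<in> X"
  shows "p_iterate p f x \<in> omega_set f x"
  unfolding omega_set_def
proof
  fix N
  have pb: "p \<noteq> bot" using p unfolding free_ultrafilter_def by blast
  have t: "((\<lambda>n. (f ^^ n) x) \<longlongrightarrow> p_iterate p f x) p"
    unfolding p_iterate_def by (rule ultra_tendsto[OF p cX]) (use funpow_in[OF fX xX] in blast)
  show "p_iterate p f x \<in> closure (tailset f x N)"
  proof (rule Lim_in_closed_set[OF closed_closure _ pb t])
    show "eventually (\<lambda>n. (f ^^ n) x \<in> closure (tailset f x N)) p"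
      using ultra_eventually_ge[OF p, of N]
    proof eventually_elim
      case (elim n)
      then have "(f ^^ n) x \<in> tailset f x N" unfolding tailset_def by blast
      then show ?case using closure_subset by blast
    qed
  qed
qed

lemma periodic_closure_omega:
  assumes pb: "periodic_pt f b" and bc: "b \<in> closure (orbit f x)"
  shows "b \<in> omega_set f (x::'a::metric_space)"
  unfolding omega_set_def
proof
  fix N
  obtain m where m: "m \<ge> 1" "(f ^^ m) b = b" using pb unfolding periodic_pt_def by auto
  have "orbit f x = (\<lambda>j. (f ^^ j) x) ` {..<N} \<union> tailset f x N"
  proof (intro equalityI subsetI)
    fix z assume "z \<in> orbit f x"
    then obtain n where n: "z = (f ^^ n) x" unfolding orbit_def by auto
    show "z \<in> (\<lambda>j. (f ^^ j) x) ` {..<N} \<union> tailset f x N"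
    proof (cases "n < N")
      case True then show ?thesis using n by auto
    next
      case False then show ?thesis using n unfolding tailset_def by auto
    qed
  qed (auto simp: orbit_def tailset_def)
  then have "closure (orbit f x) = (\<lambda>j. (f ^^ j) x) ` {..<N} \<union> closure (tailset f x N)"
    by (simp add: closure_Un finite_imp_closed)
  then consider "b \<in> (\<lambda>j. (f ^^ j) x) ` {..<N}" | "b \<in> closure (tailset f x N)" using bc by auto
  then show "b \<in> closure (tailset f x N)"
  proof cases
    case 1
    then obtain i where i: "b = (f ^^ i) x" by auto
    have "(f ^^ (m * N)) b = b" using funpow_mult_fix[OF m(2)] by simp
    then have "b = (f ^^ (m * N + i)) x" using i by (simp add: funpow_app)
    moreover have "N \<le> m * N + i" using m(1) by (simp add: trans_le_add1)
    ultimately have "b \<in> tailset f x N" unfolding tailset_def by blast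
    then show ?thesis using closure_subset by blast
  qed
qed

theorem theorem3p10:
  fixes X :: "'a::metric_space set" and f :: "'a \<Rightarrow> 'a"
    and a b :: 'a and as :: "nat \<Rightarrow> 'a" and p :: "nat filter"
  assumes "compact X" and "countable X"
    and "continuous_on X f" and "f ` X \<subseteq> X"
    and "\<forall>x\<in>X. x islimpt X \<longrightarrow> periodic_pt f x"
    and "a \<in> X" and "a islimpt X"
    and "\<forall>n. as n \<in> X"
    and "free_ultrafilter p"
    and "(\<lambda>n. p_iterate p f (as n)) \<longlonglongrightarrow> p_iterate p f a"
    and "b \<in> X" and "periodic_pt f b"
    and "b \<in> (\<Inter>n. closure (orbit f (as n)))"
  shows "b \<in> orbit f a"
proof -
  note p = assms(9)
  have pb: "p \<noteq> bot" using p unfolding free_ultrafilter_def by blast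
  have pera: "periodic_pt f a" using assms(5,6,7) by blast
  define q where "q = p_iterate p f a"
  have qa: "q \<in> orbit f a"
  proof (rule Lim_in_closed_set[OF finite_imp_closed[OF orbit_periodic_finite[OF pera]] _ pb])
    show "((\<lambda>n. (f ^^ n) a) \<longlongrightarrow> q) p"
      unfolding q_def p_iterate_def
      by (rule ultra_tendsto[OF p assms(1)]) (use funpow_in[OF assms(4,6)] in blast)
    show "eventually (\<lambda>n. (f ^^ n) a \<in> orbit f a) p" unfolding orbit_def by (auto intro: always_eventually)
  qed
  have yb: "p_iterate p f (as n) \<in> orbit f b" for n
  proof (rule omega_single[OF assms(1-5)])
    show "as n \<in> X" using assms(8) by blast
    show "b \<in> omega_set f (as n)"
      using periodic_closure_omega[OF assms(12)] assms(13) by blast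
    show "p_iterate p f (as n) \<in> omega_set f (as n)"
      using p_iter_omega[OF p assms(1,4)] assms(8) by blast
  qed
  have qb: "q \<in> orbit f b"
    using Lim_in_closed_set[OF finite_imp_closed[OF orbit_periodic_finite[OF assms(12)]] _ _ assms(10)] yb
    unfolding q_def by simp
  have "b \<in> orbit f q" using orbit_cycle[OF assms(12) qb] .
  then show ?thesis using orbit_trans[OF qa] by blast
qed

end
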